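(* Let $a,b,d$ be positive integers with $d$ not a perfect square, $\alpha=a+b^2\sqrt d$, $N_\alpha=a^2-b^4d$, and $t,u$ positive integers with $\varepsilon=(t+u\sqrt d)/2$ a unit of the ring of integers of $\mathbb{Q}(\sqrt d)$; define $x_k+y_k\sqrt d=\alpha\varepsilon^{2k}$ for $k\in\mathbb{Z}$. Suppose $k\ne0$, $\gcd(a,b)=1$, $N_\alpha<0$, and $x_k,y_k$ are both integers. Let $t'=\operatorname{core}(N_\alpha)$, $u_1=2x_k$, $u_2=\pm2\sqrt{N_\alpha/\operatorname{core}(N_\alpha)}$, and let $g$ be defined from $(t',u_1,u_2)$ as below. Then $g^2/\gcd(a^2,db^4)=2^m$ for some integer $m\ge0$.
   Context: $\operatorname{core}(n)$ is the unique squarefree integer with $n/\operatorname{core}(n)$ a perfect square. Given $t',u_1,u_2$: $g_1=\gcd(u_1,u_2)$, $g_2=\gcd(u_1/g_1,t')$ (positive gcds); $g_3=1$ if $t'\equiv1\pmod4$ and $(u_1-u_2)/g_1$ is even, $g_3=2$ if $t'\equiv3\pmod4$ and $(u_1-u_2)/g_1$ is even, $g_3=4$ otherwise; $g=g_1\sqrt{g_2/g_3}$. *)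

theory Defs
  imports Complex_Main "HOL-Computational_Algebra.Squarefree"
begin

text \<open>core n: the unique squarefree integer c with n / c a perfect square
  (i.e. n = c * s^2 for some integer s). Meaningful for n \<noteq> 0.\<close>
definition core :: "int \<Rightarrow> int" where
  "core n = (THE c. squarefree c \<and> (\<exists>s::int. n = c * s^2))"

definition g1_of :: "int \<Rightarrow> int \<Rightarrow> int" where
  "g1_of u1 u2 = gcd u1 u2"

definition g2_of :: "int \<Rightarrow> int \<Rightarrow> int \<Rightarrow> int" where
  "g2_of t' u1 u2 = gcd (u1 div g1_of u1 u2) t'"

definition g3_of :: "int \<Rightarrow> int \<Rightarrow> int \<Rightarrow> int" where
  "g3_of t' u1 u2 =
     (if t' mod 4 = 1 \<and> even ((u1 - u2) div g1_of u1 u2) then 1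
      else if t' mod 4 = 3 \<and> even ((u1 - u2) div g1_of u1 u2) then 2
      else 4)"

definition g_of :: "int \<Rightarrow> int \<Rightarrow> int \<Rightarrow> real" where
  "g_of t' u1 u2 = real_of_int (g1_of u1 u2) *
     sqrt (real_of_int (g2_of t' u1 u2) / real_of_int (g3_of t' u1 u2))"

end

theory Submission
  imports Defs
begin


lemma sq_coprime_unit:
  fixes A B :: int
  assumes "coprime A B" "A^2 = d * B^2"
  shows "is_unit B"
proof -
  have "B^2 dvd A^2" using assms(2) by simp
  moreover have "coprime (B^2) (A^2)" using assms(1) by (simp add: coprime_commute)
  ultimately have "is_unit (B^2)" by (meson coprime_absorb_right coprime_commute dvd_refl coprime_imp_gcd_eq_1 is_unit_gcd)
  then show ?thesis by (metis is_unit_power_iff zero_neq_numeral)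
qed

lemma irrat_lin:
  fixes d P Q :: int
  assumes "d > 0" "\<not> (\<exists>r::int. d = r^2)"
    and "real_of_int P + real_of_int Q * sqrt (real_of_int d) = 0"
  shows "P = 0 \<and> Q = 0"
proof (cases "Q = 0")
  case True then show ?thesis using assms by simp
next
  case False
  have "sqrt (real_of_int d) = - real_of_int P / real_of_int Q"
    using assms(3) False by (simp add: field_simps)
  then have "sqrt (real_of_int d) \<in> \<rat>" by simp
  then obtain A B where AB: "B > 0" "coprime A B" "sqrt (real_of_int d) = of_int A / of_int B"
    by (rule Rats_cases')
  then have "real_of_int d = (of_int A / of_int B)^2" using assms(1)
    by (metis of_int_0_less_iff less_imp_le real_sqrt_pow2)
  then have "real_of_int d * (of_int B)^2 = (of_int A)^2" using AB(1) by (simp add: field_simps)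
  then have "A^2 = d * B^2" by (metis of_int_eq_iff of_int_mult of_int_power)
  then have "is_unit B" using sq_coprime_unit AB(2) by blast
  then have "B = 1" using AB(1) by simp
  then show ?thesis using \<open>A^2 = d * B^2\<close> assms(2) by auto
qed

lemma par_norm:
  fixes d T U :: int
  assumes "T^2 - d*U^2 = 4"
  shows "even T = even (d*U)"
proof -
  have "T^2 = 4 + d*U^2" using assms by simp
  then have "even (T^2) = even (d*U^2)" by (metis even_add even_numeral)
  then show ?thesis by (simp add: power2_eq_square)
qed

definition good :: "int \<Rightarrow> int \<Rightarrow> int \<Rightarrow> bool" where
  "good d T U \<longleftrightarrow> T^2 - d*U^2 = 4 \<and> (even d \<longrightarrow> even T \<and> even U)"

lemma good_mult:
  fixes d T1 U1 T2 U2 :: int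
  assumes "d \<ge> 0" "good d T1 U1" "good d T2 U2"
  shows "\<exists>T U. good d T U \<and>
    ((T1 + U1 * sqrt d)/2) * ((T2 + U2 * sqrt d)/2) = (T + U * sqrt d)/2"
proof -
  have n1: "T1^2 - d*U1^2 = 4" and n2: "T2^2 - d*U2^2 = 4" using assms good_def by auto
  have p1: "even T1 = even (d*U1)" and p2: "even T2 = even (d*U2)" using par_norm n1 n2 by auto
  have e1: "even (T1*T2 + d*U1*U2)" using p1 p2 by auto
  have e2: "even (T1*U2 + T2*U1)" using p1 p2 by auto
  define T where "T = (T1*T2 + d*U1*U2) div 2"
  define U where "U = (T1*U2 + T2*U1) div 2"
  have T2: "2*T = T1*T2 + d*U1*U2" using e1 T_def by simp
  have U2: "2*U = T1*U2 + T2*U1" using e2 U_def by simp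
  have "(2*T)^2 - d*(2*U)^2 = (T1^2 - d*U1^2)*(T2^2 - d*U2^2)"
    unfolding T2 U2 by (simp add: algebra_simps power2_eq_square)
  also have "\<dots> = 16" unfolding n1 n2 by simp
  finally have h16: "(2*T)^2 - d*(2*U)^2 = 16" .
  have "(2*T)^2 - d*(2*U)^2 = 4*(T^2 - d*U^2)" by (simp add: power2_eq_square algebra_simps)
  then have "4*(T^2 - d*U^2) = 16" using h16 by linarith
  then have nn: "T^2 - d*U^2 = 4" by simp
  have ev: "even d \<longrightarrow> even T \<and> even U"
  proof
    assume "even d"
    then obtain a1 b1 a2 b2 where "T1 = 2*a1" "U1 = 2*b1" "T2 = 2*a2" "U2 = 2*b2"
      using assms good_def by (meson evenE)
    then have "2*T = 2*(2*(a1*a2 + d*b1*b2))" "2*U = 2*(2*(a1*b2+a2*b1))"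
      using T2 U2 by (simp_all add: algebra_simps)
    then show "even T \<and> even U" by (metis dvd_triv_left mult_left_cancel zero_neq_numeral)
  qed
  define r where "r = sqrt (real_of_int d)"
  have sq: "r * r = real_of_int d" using assms(1) r_def by simp
  have "(T1 + U1 * r) * (T2 + U2 * r) = T1*T2 + U1*U2*(r*r) + (T1*U2 + T2*U1) * r"
    by (simp add: algebra_simps)
  also have "\<dots> = (T1*T2 + d*U1*U2) + (T1*U2 + T2*U1) * r" unfolding sq by simp
  finally have pr: "(T1 + U1 * r) * (T2 + U2 * r) = (T1*T2 + d*U1*U2) + (T1*U2 + T2*U1) * r" .
  have "((T1 + U1 * sqrt d)/2) * ((T2 + U2 * sqrt d)/2)
       = ((T1*T2 + d*U1*U2) + (T1*U2 + T2*U1) * sqrt d)/4"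
    using pr unfolding r_def by simp
  also have "\<dots> = (real_of_int (2*T) + real_of_int (2*U) * sqrt d)/4"
    unfolding T2 U2 by simp
  also have "\<dots> = (T + U * sqrt d)/2" by simp
  finally show ?thesis using nn ev good_def by blast
qed

lemma good_pow:
  fixes d T0 U0 :: int
  assumes "d \<ge> 0" "good d T0 U0"
  shows "\<exists>T U. good d T U \<and> ((T0 + U0 * sqrt d)/2)^n = (T + U * sqrt d)/2"
proof (induction n)
  case 0
  have "good d 2 0" by (simp add: good_def)
  then show ?case by (intro exI[of _ 2] exI[of _ 0]) simp
next
  case (Suc n)
  then obtain T U where g: "good d T U" and eq: "((T0 + U0 * sqrt d)/2)^n = (T + U * sqrt d)/2" by blast
  obtain T' U' where g': "good d T' U'" and eq': 
    "((T0 + U0 * sqrt d)/2) * ((T + U * sqrt d)/2) = (T' + U' * sqrt d)/2"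
    using good_mult[OF assms(1) assms(2) g] by blast
  have "((T0 + U0 * sqrt d)/2)^Suc n = ((T0 + U0 * sqrt d)/2) * ((T + U * sqrt d)/2)"
    by (simp only: power_Suc eq)
  also have "\<dots> = (T' + U' * sqrt d)/2" by (rule eq')
  finally show ?case using g' by blast
qed


lemma eps_form:
  fixes d t u k :: int
  assumes "d > 0" "t^2 - d * u^2 = 4 \<or> t^2 - d * u^2 = -4"
  shows "\<exists>T U. good d T U \<and>
     ((real_of_int t + real_of_int u * sqrt (real_of_int d)) / 2) powi (2 * k) = (T + U * sqrt d)/2"
proof -
  define r where "r = sqrt (real_of_int d)"
  have sq: "r * r = real_of_int d" using assms(1) r_def by simp
  have pt: "even t = even (d*u)"
  proof -
    have "t^2 = d*u^2 + 2*(2::int) \<or> t^2 = d*u^2 + 2*(-2)" using assms(2) by auto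
    then obtain w::int where "t^2 = d*u^2 + 2*w" by blast
    then have "even (t^2) = even (d*u^2)" by simp
    then show ?thesis by (simp add: power2_eq_square)
  qed
  have ev0: "even (t^2 + d*u^2)" using pt by (auto simp: power2_eq_square)
  define T2 where "T2 = (t^2 + d*u^2) div 2"
  define U2 where "U2 = t*u"
  have T2e: "2*T2 = t^2 + d*u^2" using ev0 T2_def by simp
  have "(2*T2)^2 - d*(2*U2)^2 = (t^2 - d*u^2)^2" unfolding T2e U2_def
    by (simp add: power2_eq_square algebra_simps)
  also have "\<dots> = 16" using assms(2) by auto
  finally have h16: "(2*T2)^2 - d*(2*U2)^2 = 16" .
  have "(2*T2)^2 - d*(2*U2)^2 = 4*(T2^2 - d*U2^2)" by (simp add: power2_eq_square algebra_simps)
  then have "4*(T2^2 - d*U2^2) = 16" using h16 by linarith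
  then have nn: "T2^2 - d*U2^2 = 4" by simp
  have evd: "even d \<longrightarrow> even T2 \<and> even U2"
  proof
    assume "even d"
    then have "even t" using pt by simp
    then obtain t0 where t0: "t = 2*t0" by blast
    have "2*T2 = 2*t^2 + (d*u^2 - t^2)" using T2e by simp
    also have "d*u^2 - t^2 = 4 \<or> d*u^2 - t^2 = -4" using assms(2) by auto
    then have "2*t^2 + (d*u^2 - t^2) = 2*(2*(2*t0^2 + 1)) \<or> 2*t^2 + (d*u^2 - t^2) = 2*(2*(2*t0^2 - 1))"
      unfolding t0 by (auto simp: power2_eq_square)
    ultimately have "T2 = 2*(2*t0^2 + 1) \<or> T2 = 2*(2*t0^2 - 1)" by auto
    then show "even T2 \<and> even U2" using U2_def \<open>even t\<close> by auto
  qed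
  have g: "good d T2 U2" using nn evd good_def by simp
  have gi: "good d T2 (-U2)" using nn evd good_def by simp
  have eps2: "((t + u * r)/2) powi 2 = (T2 + U2 * r)/2"
  proof -
    have "((t + u * r)/2) powi 2 = (t*t + u*u*(r*r) + 2*t*u*r)/4"
      by (simp add: power2_eq_square algebra_simps)
    also have "\<dots> = (real_of_int (2*T2) + real_of_int (2*U2) * r)/4"
      unfolding sq T2e U2_def by (simp add: power2_eq_square)
    finally show ?thesis by simp
  qed
  have inv: "inverse ((T2 + U2 * r)/2) = (T2 + (-U2) * r)/2"
  proof (rule inverse_unique)
    have "((T2 + U2 * r)/2) * ((T2 + (-U2) * r)/2) = (T2*T2 - U2*U2*(r*r))/4"
      by (simp add: algebra_simps)
    also have "\<dots> = real_of_int (T2^2 - d*U2^2) / 4" unfolding sq by (simp add: power2_eq_square)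
    also have "\<dots> = 1" using nn by simp
    finally show "((T2 + U2 * r)/2) * ((T2 + (-U2) * r)/2) = 1" .
  qed
  have "((t + u * r)/2) powi (2 * k) = ((T2 + U2 * r)/2) powi k"
    by (simp only: power_int_mult eps2)
  also have "\<dots> = (if k \<ge> 0 then ((T2 + U2 * r)/2) ^ nat k else ((T2 + (-U2) * r)/2) ^ nat (-k))"
    by (simp only: power_int_def inv)
  finally have E: "((t + u * r)/2) powi (2 * k) = (if k \<ge> 0 then ((T2 + U2 * r)/2) ^ nat k else ((T2 + (-U2) * r)/2) ^ nat (-k))" .
  show ?thesis
  proof (cases "k \<ge> 0")
    case True
    then show ?thesis using E good_pow[OF _ g, of "nat k"] assms(1) unfolding r_def by auto
  next
    case False
    then show ?thesis using E good_pow[OF _ gi, of "nat (-k)"] assms(1) unfolding r_def by auto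
  qed
qed

lemma get_TU:
  fixes a b d t u k x y :: int
  assumes "d > 0" "\<not> (\<exists>r::int. d = r^2)"
    and "t^2 - d * u^2 = 4 \<or> t^2 - d * u^2 = -4"
    and "real_of_int x + real_of_int y * sqrt (real_of_int d) =
         (real_of_int a + real_of_int (b^2) * sqrt (real_of_int d)) *
         ((real_of_int t + real_of_int u * sqrt (real_of_int d)) / 2) powi (2 * k)"
  shows "\<exists>T U. good d T U \<and> 2*x = a*T + b^2*d*U \<and> 2*y = a*U + b^2*T"
proof -
  obtain T U where g: "good d T U" and e: "((real_of_int t + real_of_int u * sqrt (real_of_int d)) / 2) powi (2 * k) = (T + U * sqrt d)/2"
    using eps_form[OF assms(1,3)] by blast
  define r where "r = sqrt (real_of_int d)"
  define c where "c = b^2"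
  have sq: "r * r = real_of_int d" using assms(1) r_def by simp
  have "real_of_int x + real_of_int y * r = (a + c * r) * ((T + U * r)/2)"
    using assms(4) e unfolding r_def c_def by simp
  then have "2*x + 2*y*r = a*T + c*U*(r*r) + (a*U + c*T)*r" by (simp add: algebra_simps)
  then have "2*x + 2*y*r = a*T + c*U*d + (a*U + c*T)*r" unfolding sq by simp
  then have "real_of_int (2*x - (a*T + c*d*U)) + real_of_int (2*y - (a*U + c*T)) * r = 0"
    by (simp add: algebra_simps)
  then have "2*x - (a*T + c*d*U) = 0 \<and> 2*y - (a*U + c*T) = 0"
    using irrat_lin[OF assms(1,2)] unfolding r_def by blast
  then show ?thesis using g unfolding c_def by (auto simp: algebra_simps)
qed


lemma core_unique:
  fixes c1 c2 s1 s2 :: int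
  assumes "squarefree c1" "squarefree c2" "c1 * s1^2 = c2 * s2^2" "c1 * s1^2 \<noteq> 0"
  shows "c1 = c2"
proof -
  have s1: "s1 \<noteq> 0" and s2: "s2 \<noteq> 0" using assms by auto
  define g where "g = gcd s1 s2"
  have g0: "g \<noteq> 0" using s1 g_def by simp
  obtain m1 m2 where m0: "s1 = m1 * g" "s2 = m2 * g" "coprime m1 m2"
    using gcd_coprime_exists[of s1 s2] g0 unfolding g_def by blast
  then have m: "s1 = g * m1" "s2 = g * m2" "coprime m1 m2" by (simp_all add: mult.commute)
  have "g^2 * (c1 * m1^2) = g^2 * (c2 * m2^2)" using assms(3) m by (simp add: algebra_simps power_mult_distrib)
  then have eq: "c1 * m1^2 = c2 * m2^2" using g0 by simp
  have cp: "coprime (m1^2) (m2^2)" using m(3) by simp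
  have "m1^2 dvd c2 * m2^2" using eq by (metis dvd_triv_right)
  then have "m1^2 dvd c2" using cp by (simp add: coprime_dvd_mult_left_iff)
  then have u1: "is_unit m1" using assms(2) squarefreeD by blast
  have "m2^2 dvd c1 * m1^2" using eq by (metis dvd_triv_right)
  then have "m2^2 dvd c1" using cp by (simp add: coprime_dvd_mult_left_iff coprime_commute)
  then have u2: "is_unit m2" using assms(1) squarefreeD by blast
  have "\<bar>m1\<bar> = 1" "\<bar>m2\<bar> = 1" using u1 u2 by simp_all
  then have "m1^2 = 1" "m2^2 = 1" by (metis power2_abs one_power2)+
  then show ?thesis using eq by simp
qed

lemma core_prop:
  fixes n :: int
  assumes "n \<noteq> 0"
  shows "squarefree (core n) \<and> (\<exists>s::int. n = core n * s^2)"
proof -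
  have ex: "squarefree (squarefree_part n) \<and> (\<exists>s::int. n = squarefree_part n * s^2)"
    using squarefree_decompose[of n] by blast
  have "\<exists>!c. squarefree c \<and> (\<exists>s::int. n = c * s^2)"
  proof (rule ex1I[of _ "squarefree_part n"])
    show "squarefree (squarefree_part n) \<and> (\<exists>s::int. n = squarefree_part n * s^2)" by (rule ex)
  next
    fix c assume c: "squarefree c \<and> (\<exists>s::int. n = c * s^2)"
    then obtain s where s: "n = c * s^2" by blast
    obtain s' where s': "n = squarefree_part n * s'^2" using ex by blast
    have e: "c * s^2 = squarefree_part n * s'^2" using s s' by simp
    have nz: "c * s^2 \<noteq> 0" using s assms by simp
    show "c = squarefree_part n" using core_unique[OF _ _ e nz] c ex by blast
  qed
  then show ?thesis unfolding core_def by (rule theI')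
qed



lemma mult_sum_ge:
  fixes p m n :: int
  assumes "prime p" "m + n \<noteq> 0"
  shows "min (multiplicity p m) (multiplicity p n) \<le> multiplicity p (m + n)"
proof -
  define k where "k = min (multiplicity p m) (multiplicity p n)"
  have "p ^ k dvd m" "p ^ k dvd n" unfolding k_def by (rule multiplicity_dvd'; simp)+
  then have "p ^ k dvd m + n" by simp
  then have "k \<le> multiplicity p (m + n)"
    using power_dvd_iff_le_multiplicity assms not_prime_unit by blast
  then show ?thesis unfolding k_def .
qed

lemma mult_sum_eq:
  fixes p m n :: int
  assumes "prime p" "m \<noteq> 0" "n = 0 \<or> multiplicity p m < multiplicity p n"
  shows "multiplicity p (m + n) = multiplicity p m"
proof (cases "n = 0")
  case True then show ?thesis by simp
next
  case False
  then have lt: "multiplicity p m < multiplicity p n" using assms by simp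
  have nz: "m + n \<noteq> 0"
  proof
    assume "m + n = 0"
    then have "m = -n" by simp
    then show False using lt by simp
  qed
  have ge: "multiplicity p m \<le> multiplicity p (m + n)" using mult_sum_ge[OF assms(1) nz] lt by simp
  have pu: "\<not> is_unit p" using assms(1) not_prime_unit by blast
  have "\<not> p ^ Suc (multiplicity p m) dvd m"
    using power_dvd_iff_le_multiplicity[OF assms(2) pu, of "Suc (multiplicity p m)"] by linarith
  moreover have "p ^ Suc (multiplicity p m) dvd n" using lt by (intro multiplicity_dvd') simp
  ultimately have "\<not> p ^ Suc (multiplicity p m) dvd m + n"
    by (metis add_diff_cancel_right' dvd_diff)
  then have "multiplicity p (m + n) < Suc (multiplicity p m)"
    using power_dvd_iff_le_multiplicity[OF nz pu, of "Suc (multiplicity p m)"] by linarith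
  then show ?thesis using ge by simp
qed


lemma prime_dvd_two:
  fixes p :: int
  assumes "prime p" "p dvd 2"
  shows "p = 2"
proof -
  have "p \<le> 2" using assms(2) zdvd_imp_le by simp
  moreover have "p \<ge> 2" using assms(1) prime_ge_2_int by simp
  ultimately show ?thesis by simp
qed

lemma prime_dvd_four:
  fixes p :: int
  assumes "prime p" "p dvd 4"
  shows "p = 2"
proof -
  have "p dvd 2^2" using assms(2) by simp
  then have "p dvd 2" using assms(1) prime_dvd_power by blast
  then show ?thesis using prime_dvd_two assms(1) by blast
qed

lemma mult_gcd_gen:
  fixes p m n :: int
  assumes "prime p" "n \<noteq> 0"
  shows "multiplicity p (gcd m n) = (if m = 0 then multiplicity p n else min (multiplicity p m) (multiplicity p n))"
  using multiplicity_gcd[of m n p] assms by (auto simp: abs_if)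

lemma sqfree_mult_le1:
  fixes p t :: int
  assumes "prime p" "squarefree t" "t \<noteq> 0"
  shows "multiplicity p t \<le> 1"
proof (rule ccontr)
  assume "\<not> multiplicity p t \<le> 1"
  then have "p^2 dvd t" by (intro multiplicity_dvd') simp
  then have "is_unit p" using assms(2) squarefreeD by blast
  then show False using assms(1) not_prime_unit by blast
qed


lemma local_val:
  fixes p a c d x y T U s t' :: int
  assumes p: "prime p" and a0: "a > 0" and c0: "c > 0" and d0: "d > 0" and cop: "coprime a c"
    and g: "good d T U" and ex: "2*x = a*T + c*d*U" and ey: "2*y = a*U + c*T"
    and Nn: "a^2 - c^2*d < 0" and Ns: "a^2 - c^2*d = t' * s^2" and s0: "s > 0"
    and sf: "squarefree t'"
    and pc: "p \<noteq> 2 \<or> (p dvd a \<and> p dvd d)"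
  shows "2 * multiplicity p (gcd x s) + multiplicity p (gcd (x div gcd x s) t')
         = multiplicity p (gcd (a^2) (d*c^2))"
proof -
  define N where "N = a^2 - c^2*d"
  define h where "h = gcd x s"
  define g2 where "g2 = gcd (x div h) t'"
  define G where "G = gcd (a^2) (d*c^2)"
  have nrm: "T^2 - d*U^2 = 4" using g good_def by simp
  have N0: "N \<noteq> 0" using Nn N_def by simp
  have t0: "t' \<noteq> 0" using N0 Ns N_def by auto
  have h0: "h \<noteq> 0" using s0 h_def by simp
  have g20: "g2 \<noteq> 0" using t0 g2_def by simp
  have G0: "G \<noteq> 0" using a0 G_def by simp
  have a2: "2*a = x*T - d*y*U"
  proof -
    have "2*(2*a) = a*(T^2 - d*U^2)" using nrm by simp
    also have "\<dots> = (a*T + c*d*U)*T - d*(a*U + c*T)*U" by (simp add: power2_eq_square algebra_simps)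
    also have "\<dots> = (2*x)*T - d*(2*y)*U" using ex ey by simp
    also have "\<dots> = 2*(x*T - d*y*U)" by (simp add: algebra_simps)
    finally show ?thesis by simp
  qed
  have Nxy: "N = x^2 - d*y^2"
  proof -
    have "4*(x^2 - d*y^2) = (2*x)^2 - d*(2*y)^2" by (simp add: power2_eq_square algebra_simps)
    also have "\<dots> = (a^2 - c^2*d)*(T^2 - d*U^2)" unfolding ex ey by (simp add: power2_eq_square algebra_simps)
    also have "\<dots> = 4*N" using nrm N_def by simp
    finally show ?thesis by simp
  qed
  have hs: "h dvd s" "h dvd x" unfolding h_def by simp_all
  have g2t: "g2 dvd t'" "g2 dvd x div h" unfolding g2_def by simp_all
  have xdh: "x div h dvd x" using hs(2) by (metis dvd_div_mult_self dvd_triv_left)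
  have sN: "s dvd N" "t' dvd N" using Ns N_def by simp_all
  have GN: "G dvd N" "G dvd a^2" unfolding G_def N_def
    by (simp_all add: algebra_simps dvd_diff)
  have pu: "\<not> is_unit p" using p not_prime_unit by blast
  have pe: "prime_elem p" using p prime_imp_prime_elem by blast
  have mm: "\<And>m n. m \<noteq> 0 \<Longrightarrow> n \<noteq> 0 \<Longrightarrow> multiplicity p (m*n) = multiplicity p m + multiplicity p n"
    using prime_elem_multiplicity_mult_distrib[OF pe] by blast
  have mp: "\<And>m k. m \<noteq> 0 \<Longrightarrow> multiplicity p (m^k) = k * multiplicity p m"
    using prime_elem_multiplicity_power_distrib[OF pe] by blast
  have z: "\<And>m. \<not> p dvd m \<Longrightarrow> multiplicity p m = 0" using not_dvd_imp_multiplicity_0 by blast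
  have pos: "\<And>m. m \<noteq> 0 \<Longrightarrow> p dvd m \<Longrightarrow> multiplicity p m > 0"
    using multiplicity_gt_zero_iff pu by blast
  have goal: "2 * multiplicity p h + multiplicity p g2 = multiplicity p G"
  proof -
    consider (c1) "\<not> p dvd N" | (c2) "p dvd N" "\<not> p dvd a" | (c3) "p dvd N" "p dvd a" by blast
    then show ?thesis
    proof cases
      case c1
      have "\<not> p dvd h" using c1 hs sN dvd_trans by blast
      moreover have "\<not> p dvd g2" using c1 g2t sN dvd_trans by blast
      moreover have "\<not> p dvd G" using c1 GN dvd_trans by blast
      ultimately show ?thesis using z by simp
    next
      case c2
      have p2: "p \<noteq> 2" using pc c2 by blast
      have nx: "\<not> p dvd x"
      proof
        assume px: "p dvd x"
        have nd: "\<not> p dvd d"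
        proof
          assume "p dvd d"
          then have "p dvd c^2*d" by simp
          moreover have "a^2 = N + c^2*d" by (simp add: N_def)
          ultimately have "p dvd a^2" using c2(1) by (metis dvd_add)
          then show False using c2(2) p prime_dvd_power by blast
        qed
        have "p dvd x^2" using px by (simp add: power2_eq_square)
        moreover have "d*y^2 = x^2 - N" using Nxy by simp
        ultimately have "p dvd d*y^2" using c2(1) by (metis dvd_diff)
        then have "p dvd y^2" using nd p prime_dvd_mult_iff by blast
        then have "p dvd y" using p prime_dvd_power by blast
        then have "p dvd x*T - d*y*U" using px by simp
        then have "p dvd 2*a" using a2 by simp
        then have "p dvd 2 \<or> p dvd a" using p prime_dvd_mult_iff by blast
        then show False using c2(2) p2 prime_dvd_two p by blast
      qed
      have "\<not> p dvd h" using nx hs dvd_trans by blast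
      moreover have "\<not> p dvd g2" using nx g2t xdh dvd_trans by blast
      moreover have "\<not> p dvd G" using c2(2) GN(2) dvd_trans p prime_dvd_power by blast
      ultimately show ?thesis using z by simp
    next
      case c3
      have nc: "\<not> p dvd c"
      proof
        assume "p dvd c"
        then have "is_unit p" using c3(2) cop coprime_common_divisor by blast
        then show False using pu by blast
      qed
      have pd: "p dvd d"
      proof -
        have "c^2*d = a^2 - N" by (simp add: N_def)
        moreover have "p dvd a^2" using c3(2) by (simp add: power2_eq_square)
        ultimately have "p dvd c^2*d" using c3(1) by (metis dvd_diff)
        moreover have "\<not> p dvd c^2" using nc p prime_dvd_power by blast
        ultimately show ?thesis using p prime_dvd_mult_iff by blast
      qed
      obtain w T' U' where wx: "w*x = a*T' + c*d*U'" and nT: "\<not> p dvd T'" and nw: "\<not> p dvd w"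
      proof (cases "p = 2")
        case True
        then have ed: "even d" using pd by simp
        then have "even T" "even U" using g good_def by auto
        then obtain T0 U0 where TU: "T = 2*T0" "U = 2*U0" by (meson evenE)
        have "2*x = 2*(a*T0 + c*d*U0)" using ex TU by (simp add: algebra_simps)
        then have x1: "1*x = a*T0 + c*d*U0" by simp
        have "4*(T0^2 - d*U0^2) = 4*1" using nrm TU by (simp add: power2_eq_square algebra_simps)
        then have "T0^2 = 1 + d*U0^2" by simp
        moreover have "even (d*U0^2)" using ed by simp
        ultimately have "odd (T0^2)" by simp
        then have "odd T0" by simp
        then show ?thesis using that[OF x1] True by simp
      next
        case False
        have "\<not> p dvd T"
        proof
          assume "p dvd T"
          then have "p dvd T^2 - d*U^2" using pd by (simp add: power2_eq_square)
          then show False using nrm prime_dvd_four p False by simp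
        qed
        moreover have "\<not> p dvd 2" using prime_dvd_two p False by blast
        ultimately show ?thesis using that[OF ex] by blast
      qed
      have w0: "w \<noteq> 0" and T'0: "T' \<noteq> 0" using nw nT by auto
      define e where "e = multiplicity p a"
      define f where "f = multiplicity p d"
      have e1: "e \<ge> 1" using pos[of a] a0 c3(2) e_def by simp
      have f1: "f \<ge> 1" using pos[of d] d0 pd f_def by simp
      have vc: "multiplicity p c = 0" using z nc by blast
      have vT: "multiplicity p T' = 0" and vw: "multiplicity p w = 0" using z nT nw by auto
      have va2: "multiplicity p (a^2) = 2*e" using mp a0 e_def by simp
      have vdc: "multiplicity p (d*c^2) = f" using mm mp vc d0 c0 f_def by simp
      have vG: "multiplicity p G = min (2*e) f"
        unfolding G_def using multiplicity_gcd[of "a^2" "d*c^2" p] p a0 d0 c0 va2 vdc by simp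
      have vcd: "multiplicity p (-(c^2*d)) = f" using vdc by (simp add: mult.commute)
      have vaT: "multiplicity p (a*T') = e" using mm a0 T'0 vT e_def by simp
      have vcdU: "U' \<noteq> 0 \<Longrightarrow> multiplicity p (c*d*U') = f + multiplicity p U'"
        using mm vc c0 d0 f_def by simp
      have Nsum: "N = a^2 + (-(c^2*d))" by (simp add: N_def)
      have vt1: "multiplicity p t' \<le> 1" using sqfree_mult_le1 p sf t0 by blast
      have vN: "multiplicity p N = multiplicity p t' + 2 * multiplicity p s"
        using Ns N_def mm mp t0 s0 by simp
      show ?thesis
      proof (cases "x = 0")
        case True
        have hx: "h = \<bar>s\<bar>" using True h_def by simp
        have gx: "g2 = \<bar>t'\<bar>" using True g2_def by simp
        have vh: "multiplicity p h = multiplicity p s" using hx s0 by simp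
        have vg: "multiplicity p g2 = multiplicity p t'" using gx by (simp add: abs_if)
        have "a*T' = -(c*d*U')" using wx True by simp
        then have U'0: "U' \<noteq> 0" using a0 T'0 by auto
        have "e = multiplicity p (-(c*d*U'))" using vaT \<open>a*T' = -(c*d*U')\<close> by simp
        then have "e = f + multiplicity p U'" using vcdU U'0 by simp
        then have "f < 2*e" using f1 by simp
        then have "multiplicity p N = f"
          using mult_sum_eq[OF p, of "-(c^2*d)" "a^2"] Nsum vcd va2 c0 d0 by (simp add: add.commute)
        then show ?thesis using vh vg vN vG \<open>f < 2*e\<close> by simp
      next
        case False
        have vwx: "multiplicity p (w*x) = multiplicity p x" using mm w0 False vw by simp
        have hdec: "h * (x div h) = x" using hs(2) by simp
        have xdh0: "x div h \<noteq> 0"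
        proof
          assume "x div h = 0"
          then have "h * (x div h) = 0" by simp
          then show False using hdec False by simp
        qed
        have "multiplicity p x = multiplicity p (h * (x div h))" by (simp only: hdec)
        also have "\<dots> = multiplicity p h + multiplicity p (x div h)" using mm h0 xdh0 by blast
        finally have vxdh: "multiplicity p x = multiplicity p h + multiplicity p (x div h)" .
        have vh: "multiplicity p h = min (multiplicity p x) (multiplicity p s)"
          unfolding h_def using multiplicity_gcd[of x s p] False s0 p by simp
        have vg: "multiplicity p g2 = min (multiplicity p (x div h)) (multiplicity p t')"
          unfolding g2_def using multiplicity_gcd[of "x div h" t' p] xdh0 t0 p by simp
        show ?thesis
        proof (cases "2*e \<le> f")
          case True
          have "multiplicity p (a*T' + c*d*U') = e"
            using mult_sum_eq[OF p, of "a*T'" "c*d*U'"] a0 T'0 vaT vcdU True e1 by fastforce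
          then have vx: "multiplicity p x = e" using wx vwx by simp
          have "min (2*e) f \<le> multiplicity p N"
            using mult_sum_ge[OF p, of "a^2" "-(c^2*d)"] Nsum N0 va2 vcd by simp
          then have "2*e \<le> multiplicity p N" using True by simp
          then have vse: "multiplicity p s \<ge> e" using vN vt1 by linarith
          have vh': "multiplicity p h = e" using vh vx vse by simp
          have "multiplicity p (x div h) = 0" using vxdh vx vh' by simp
          then have "multiplicity p g2 = 0" using vg by simp
          then show ?thesis using vh' vG True by simp
        next
          case False
          have "multiplicity p N = f"
            using mult_sum_eq[OF p, of "-(c^2*d)" "a^2"] Nsum vcd va2 c0 d0 False by (simp add: add.commute)
          have "multiplicity p (a*T' + c*d*U') \<ge> min e f"
          proof (cases "U' = 0")
            case True then show ?thesis using vaT by simp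
          next
            case U'0: False
            have "w*x \<noteq> 0" using w0 \<open>x \<noteq> 0\<close> by simp
            then have "a*T' + c*d*U' \<noteq> 0" unfolding wx .
            then have "min (multiplicity p (a*T')) (multiplicity p (c*d*U')) \<le> multiplicity p (a*T' + c*d*U')"
              using mult_sum_ge[OF p] by blast
            then show ?thesis using vaT vcdU[OF U'0] by simp
          qed
          then have vx: "multiplicity p x \<ge> min e f" using wx vwx by simp
          have "2 * multiplicity p s \<le> f" using vN \<open>multiplicity p N = f\<close> by simp
          then have lt: "multiplicity p s < multiplicity p x" using vx False f1 by simp
          then have vh': "multiplicity p h = multiplicity p s" using vh by simp
          then have "multiplicity p (x div h) \<ge> 1" using vxdh lt by linarith
          then have vg': "multiplicity p g2 = multiplicity p t'" using vg vt1 by simp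
          have "min (2*e) f = f" using False by simp
          then show ?thesis using vh' vg' vG vN \<open>multiplicity p N = f\<close> by linarith
        qed
      qed
    qed
  qed
  then show ?thesis unfolding h_def g2_def G_def .
qed


lemma pow2_from_mult:
  fixes G R :: int
  assumes G0: "G > 0" and R0: "R > 0"
    and odd: "\<And>p. prime p \<Longrightarrow> p \<noteq> 2 \<Longrightarrow> multiplicity p R = multiplicity p G"
    and two: "multiplicity 2 G \<le> multiplicity 2 R"
  shows "\<exists>m::nat. R = G * 2^m"
proof -
  have "G dvd R"
  proof (rule multiplicity_le_imp_dvd)
    show "G \<noteq> 0" using G0 by simp
    fix p :: int assume p: "prime p"
    show "multiplicity p G \<le> multiplicity p R"
      using odd[OF p] two by (cases "p = 2") auto
  qed
  then obtain q where q: "R = G * q" by blast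
  have q0: "q > 0" using q G0 R0 by (simp add: zero_less_mult_iff)
  define m where "m = multiplicity 2 q"
  have pe2: "prime (2::int)" by simp
  have "normalize q = normalize ((2::int)^m)"
  proof (rule multiplicity_eq_imp_eq)
    show "q \<noteq> 0" using q0 by simp
    show "(2::int)^m \<noteq> 0" by simp
    fix p :: int assume p: "prime p"
    have mq: "multiplicity p R = multiplicity p G + multiplicity p q"
      using q prime_elem_multiplicity_mult_distrib[OF prime_imp_prime_elem[OF p], of G q] G0 q0 by simp
    show "multiplicity p q = multiplicity p (2^m)"
    proof (cases "p = 2")
      case True
      then show ?thesis using m_def by simp
    next
      case False
      then have "multiplicity p q = 0" using mq odd[OF p False] by simp
      moreover have "multiplicity p ((2::int)^m) = 0"
        using multiplicity_distinct_prime_power[OF p pe2 False] .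
      ultimately show ?thesis by simp
    qed
  qed
  then have "q = 2^m" using q0 by simp
  then show ?thesis using q by blast
qed


theorem lemma3p11:
  fixes a b d t u k x y :: int
  assumes "a > 0" "b > 0" "d > 0"
    and "\<not> (\<exists>r::int. d = r^2)"
    and "t > 0" "u > 0"
    and "t^2 - d * u^2 = 4 \<or> t^2 - d * u^2 = -4"
    and "real_of_int x + real_of_int y * sqrt (real_of_int d) =
         (real_of_int a + real_of_int (b^2) * sqrt (real_of_int d)) *
         ((real_of_int t + real_of_int u * sqrt (real_of_int d)) / 2) powi (2 * k)"
    and "k \<noteq> 0"
    and "gcd a b = 1"
    and "a^2 - b^4 * d < 0"
    and "s \<ge> 0" "(a^2 - b^4 * d) = core (a^2 - b^4 * d) * s^2"
    and "u2 = 2 * s \<or> u2 = -2 * s"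
  shows "\<exists>m::nat. (g_of (core (a^2 - b^4 * d)) (2 * x) u2)^2
                    / real_of_int (gcd (a^2) (d * b^4)) = 2 ^ m"
proof -
  define c where "c = b^2"
  define N where "N = a^2 - b^4 * d"
  define t' where "t' = core N"
  have c0: "c > 0" using assms(2) c_def by simp
  have "coprime a b" using assms(10) by (simp add: coprime_iff_gcd_eq_1)
  then have cop: "coprime a c" unfolding c_def by simp
  obtain T U where g: "good d T U" and ex: "2*x = a*T + b^2*d*U" and ey: "2*y = a*U + b^2*T"
    using get_TU[OF assms(3,4,7,8)] by blast
  have ex': "2*x = a*T + c*d*U" and ey': "2*y = a*U + c*T" using ex ey c_def by simp_all
  have b4: "b^4 = c^2" unfolding c_def by (simp flip: power_mult)
  have Nc: "N = a^2 - c^2*d" unfolding N_def b4 by (simp add: mult.commute)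
  have Nneg: "a^2 - c^2*d < 0" using assms(11) b4 by (simp add: mult.commute)
  have N0: "N \<noteq> 0" using assms(11) N_def by simp
  have sf: "squarefree t'" using core_prop[OF N0] t'_def by blast
  have Nts: "N = t' * s^2" using assms(13) unfolding N_def t'_def .
  have Ns: "a^2 - c^2*d = t' * s^2" using Nts Nc by simp
  have s0: "s > 0"
  proof -
    have "s \<noteq> 0" using Ns Nneg by auto
    then show ?thesis using assms(12) by simp
  qed
  define h where "h = gcd x s"
  define g2 where "g2 = gcd (x div h) t'"
  define G where "G = gcd (a^2) (d*c^2)"
  have h0: "h > 0" using s0 h_def by simp
  have t0: "t' \<noteq> 0" using Ns Nneg by auto
  have g20: "g2 > 0" using t0 g2_def by simp
  have G0: "G > 0" using assms(1) G_def by simp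
  have GG: "gcd (a^2) (d * b^4) = G" unfolding G_def b4 ..
  have g1: "g1_of (2*x) u2 = 2*h"
  proof -
    have "gcd (2*x) (2*s) = 2*h" unfolding h_def using gcd_mult_left[of 2 x s] by simp
    moreover have "gcd (2*x) (-2*s) = gcd (2*x) (2*s)" by (metis gcd_neg2 mult_minus_left)
    ultimately show ?thesis using assms(14) g1_of_def by auto
  qed
  have g2e: "g2_of t' (2*x) u2 = g2"
    unfolding g2_of_def g1 g2_def using h0 by simp
  define g3 where "g3 = g3_of t' (2*x) u2"
  obtain j :: nat where j: "g3 = 2^j" "j \<le> 2"
  proof -
    have "g3 = 2^0 \<or> g3 = 2^1 \<or> g3 = 2^2" unfolding g3_def g3_of_def by auto
    then show ?thesis using that by fastforce
  qed
  have g30: "g3 > 0" using j by simp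
  have gof: "(g_of t' (2*x) u2)^2 = real_of_int (4*h^2*g2) / real_of_int g3"
  proof -
    have "(g_of t' (2*x) u2)^2 = (real_of_int (2*h))^2 * (sqrt (real_of_int g2 / real_of_int g3))^2"
      unfolding g_of_def g1 g2e g3_def by (simp add: power_mult_distrib)
    also have "(sqrt (real_of_int g2 / real_of_int g3))^2 = real_of_int g2 / real_of_int g3"
      using g20 g30 by simp
    finally show ?thesis by (simp add: power_mult_distrib)
  qed
  have g3dvd: "g3 dvd 4*h^2*g2" using j by (auto simp: le_Suc_eq numeral_2_eq_2)
  define R where "R = (4*h^2*g2) div g3"
  have R: "g3 * R = 4*h^2*g2" using g3dvd R_def by simp
  have "4*h^2*g2 > 0" using h0 g20 by simp
  then have "g3 * R > 0" using R by simp
  then have R0: "R > 0" using g30 by (simp add: zero_less_mult_iff)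
  have loc: "\<And>p. prime p \<Longrightarrow> p \<noteq> 2 \<or> (p dvd a \<and> p dvd d) \<Longrightarrow>
      2 * multiplicity p h + multiplicity p g2 = multiplicity p G"
    unfolding h_def g2_def G_def
    using local_val[OF _ assms(1) c0 assms(3) cop g ex' ey' Nneg Ns s0 sf] by blast
  have vR: "\<And>p. prime p \<Longrightarrow> multiplicity p g3 + multiplicity p R = multiplicity p 4 + 2 * multiplicity p h + multiplicity p g2"
  proof -
    fix p :: int assume p: "prime p"
    have pe: "prime_elem p" using p prime_imp_prime_elem by blast
    have "multiplicity p (g3 * R) = multiplicity p g3 + multiplicity p R"
      using prime_elem_multiplicity_mult_distrib[OF pe] g30 R0 by simp
    moreover have "multiplicity p (4*h^2*g2) = multiplicity p 4 + 2 * multiplicity p h + multiplicity p g2"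
      using prime_elem_multiplicity_mult_distrib[OF pe] prime_elem_multiplicity_power_distrib[OF pe] h0 g20
      by simp
    ultimately show "?thesis p" using R by simp
  qed
  have ex2: "\<exists>m::nat. R = G * 2^m"
  proof (rule pow2_from_mult[OF G0 R0])
    fix p :: int assume p: "prime p" "p \<noteq> 2"
    have "multiplicity p g3 = 0" using multiplicity_distinct_prime_power[OF p(1), of 2] p j by simp
    moreover have "prime (2::int)" by simp
    then have "multiplicity p ((2::int)^2) = 0" using multiplicity_distinct_prime_power[OF p(1) _ p(2)] by blast
    then have "multiplicity p (4::int) = 0" by simp
    ultimately have "multiplicity p g3 = 0" "multiplicity p (4::int) = 0" by simp_all
    then show "multiplicity p R = multiplicity p G" using vR[OF p(1)] loc[OF p(1)] p(2) by simp
  next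
    have p2: "prime (2::int)" by simp
    have v4: "multiplicity 2 (4::int) = 2" using multiplicity_prime_power[of "2::int" 2] by simp
    have vg3: "multiplicity 2 g3 = j" using j by simp
    show "multiplicity 2 G \<le> multiplicity 2 R"
    proof (cases "2 dvd a \<and> 2 dvd d")
      case True
      then show ?thesis using vR[OF p2] loc[OF p2] v4 vg3 j by simp
    next
      case False
      have "\<not> 2 dvd G"
      proof
        assume "2 dvd G"
        then have "2 dvd a^2" "2 dvd d*c^2" unfolding G_def by (auto intro: dvd_trans)
        then have a2: "2 dvd a" by simp
        then have "\<not> 2 dvd c" using cop by (metis coprime_common_divisor not_prime_unit p2)
        then show False using False a2 \<open>2 dvd d*c^2\<close> by simp
      qed
      then have "multiplicity 2 G = 0" by (rule not_dvd_imp_multiplicity_0)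
      then show ?thesis by simp
    qed
  qed
  then obtain m :: nat where m: "R = G * 2^m" by blast
  have "(g_of t' (2*x) u2)^2 / real_of_int G = real_of_int R / real_of_int G"
  proof -
    have "real_of_int (4*h^2*g2) = real_of_int g3 * real_of_int R" using R by (metis of_int_mult)
    then have "real_of_int (4*h^2*g2) / real_of_int g3 = real_of_int R" using g30 by simp
    then show ?thesis using gof by simp
  qed
  also have "\<dots> = 2^m" using m G0 by simp
  finally show ?thesis unfolding GG[symmetric] t'_def N_def by blast
qed

end
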